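(* Let $(F,\phi)$ be an extended representation graph for $E$, let $w\in F^0$, and let $p,q$ be paths of length $\ge1$ in $F$ with source $w$. If $r(p)=r(q)$, then $p=q$, or $cp=q$, or $p=cq$ for some closed path $c$ in $F$.
   Context: $E$ is a row-finite directed graph with, for each vertex $v$ emitting an edge, a chosen special edge $e^v\in s^{-1}(v)$; other edges are nonspecial. The double graph $E_d$ has vertices $E^0$ and edges $e$ (real) and $e^*$ (ghost) for $e\in E^1$, with $s_d(e)=s(e),r_d(e)=r(e),s_d(e^* )=r(e),r_d(e^* )=s(e)$. A closed path is a path of length $\ge1$ with equal source and range; juxtaposition denotes concatenation. An extended representation graph for $E$ is a pair $(F,\phi)$, $F$ a directed graph, $\phi:F\to E_d$ a graph homomorphism, such that for every $w\in F^0$: (i) $w$ is a source or receives exactly one edge $f_w$; (ii) if $w$ is a source or $\phi(f_w)$ is a nonspecial real edge, $\phi$ maps $s^{-1}(w)$ bijectively onto $s_d^{-1}(\phi(w))$; (iii) if $\phi(f_w)$ is a special real edge, onto $s_d^{-1}(\phi(w))\setminus\{\phi(f_w)^*\}$; (iv) if $\phi(f_w)$ is a ghost edge, onto the ghost edges in $s_d^{-1}(\phi(w))$. *)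

theory Defs
  imports Main
begin

definition digraph :: "'v set \<Rightarrow> 'e set \<Rightarrow> ('e \<Rightarrow> 'v) \<Rightarrow> ('e \<Rightarrow> 'v) \<Rightarrow> bool" where
  "digraph V Ed s r \<longleftrightarrow> (\<forall>e\<in>Ed. s e \<in> V \<and> r e \<in> V)"

definition row_finite :: "'v set \<Rightarrow> 'e set \<Rightarrow> ('e \<Rightarrow> 'v) \<Rightarrow> bool" where
  "row_finite V Ed s \<longleftrightarrow> (\<forall>v\<in>V. finite {e\<in>Ed. s e = v})"

definition special_choice :: "'v set \<Rightarrow> 'e set \<Rightarrow> ('e \<Rightarrow> 'v) \<Rightarrow> ('v \<Rightarrow> 'e) \<Rightarrow> bool" where
  "special_choice V Ed s sp \<longleftrightarrow>
     (\<forall>v\<in>V. {e\<in>Ed. s e = v} \<noteq> {} \<longrightarrow> sp v \<in> Ed \<and> s (sp v) = v)"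

definition is_special :: "('e \<Rightarrow> 'v) \<Rightarrow> ('v \<Rightarrow> 'e) \<Rightarrow> 'e \<Rightarrow> bool" where
  "is_special s sp e \<longleftrightarrow> e = sp (s e)"

text \<open>Edges of the double graph E_d: real edges e and ghost edges e*.\<close>
datatype 'e dedge = Real 'e | Ghost 'e

fun is_ghost :: "'e dedge \<Rightarrow> bool" where
  "is_ghost (Real e) = False" | "is_ghost (Ghost e) = True"

definition dedges :: "'e set \<Rightarrow> 'e dedge set" where
  "dedges Ed = Real ` Ed \<union> Ghost ` Ed"

fun ds :: "('e \<Rightarrow> 'v) \<Rightarrow> ('e \<Rightarrow> 'v) \<Rightarrow> 'e dedge \<Rightarrow> 'v" where
  "ds s r (Real e) = s e" | "ds s r (Ghost e) = r e"

fun dr :: "('e \<Rightarrow> 'v) \<Rightarrow> ('e \<Rightarrow> 'v) \<Rightarrow> 'e dedge \<Rightarrow> 'v" where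
  "dr s r (Real e) = r e" | "dr s r (Ghost e) = s e"

definition dout :: "'e set \<Rightarrow> ('e \<Rightarrow> 'v) \<Rightarrow> ('e \<Rightarrow> 'v) \<Rightarrow> 'v \<Rightarrow> 'e dedge set" where
  "dout Ed s r v = {x \<in> dedges Ed. ds s r x = v}"

text \<open>Extended representation graph (F, phi) for E (with special-edge choice sp).
  phi is given by a vertex map phi0 and an edge map phi1.\<close>
definition ext_rep_graph ::
  "'v set \<Rightarrow> 'e set \<Rightarrow> ('e \<Rightarrow> 'v) \<Rightarrow> ('e \<Rightarrow> 'v) \<Rightarrow> ('v \<Rightarrow> 'e) \<Rightarrow>
   'w set \<Rightarrow> 'f set \<Rightarrow> ('f \<Rightarrow> 'w) \<Rightarrow> ('f \<Rightarrow> 'w) \<Rightarrow> ('w \<Rightarrow> 'v) \<Rightarrow> ('f \<Rightarrow> 'e dedge) \<Rightarrow> bool" where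
  "ext_rep_graph V Ed s r sp W Fd sF rF phi0 phi1 \<longleftrightarrow>
     digraph W Fd sF rF \<and>
     (\<forall>w\<in>W. phi0 w \<in> V) \<and>
     (\<forall>f\<in>Fd. phi1 f \<in> dedges Ed \<and> ds s r (phi1 f) = phi0 (sF f) \<and> dr s r (phi1 f) = phi0 (rF f)) \<and>
     (\<forall>w\<in>W.
        ({f\<in>Fd. rF f = w} = {} \<or> (\<exists>f. {f\<in>Fd. rF f = w} = {f})) \<and>
        ({f\<in>Fd. rF f = w} = {} \<longrightarrow>
           bij_betw phi1 {f\<in>Fd. sF f = w} (dout Ed s r (phi0 w))) \<and>
        (\<forall>f\<in>Fd. rF f = w \<longrightarrow>
           (\<forall>e. phi1 f = Real e \<and> \<not> is_special s sp e \<longrightarrow>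
                bij_betw phi1 {g\<in>Fd. sF g = w} (dout Ed s r (phi0 w))) \<and>
           (\<forall>e. phi1 f = Real e \<and> is_special s sp e \<longrightarrow>
                bij_betw phi1 {g\<in>Fd. sF g = w} (dout Ed s r (phi0 w) - {Ghost e})) \<and>
           (\<forall>e. phi1 f = Ghost e \<longrightarrow>
                bij_betw phi1 {g\<in>Fd. sF g = w} {x \<in> dout Ed s r (phi0 w). is_ghost x})))"

text \<open>Paths of length at least 1 as nonempty edge lists e1 e2 ... en with r(e_i) = s(e_(i+1));
  juxtaposition is list append.\<close>
definition is_path :: "'f set \<Rightarrow> ('f \<Rightarrow> 'w) \<Rightarrow> ('f \<Rightarrow> 'w) \<Rightarrow> 'f list \<Rightarrow> bool" where
  "is_path Fd sF rF p \<longleftrightarrow> p \<noteq> [] \<and> set p \<subseteq> Fd \<and>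
     (\<forall>i. Suc i < length p \<longrightarrow> rF (p ! i) = sF (p ! Suc i))"

definition path_src :: "('f \<Rightarrow> 'w) \<Rightarrow> 'f list \<Rightarrow> 'w" where
  "path_src sF p = sF (hd p)"

definition path_rng :: "('f \<Rightarrow> 'w) \<Rightarrow> 'f list \<Rightarrow> 'w" where
  "path_rng rF p = rF (last p)"

definition is_closed_path :: "'f set \<Rightarrow> ('f \<Rightarrow> 'w) \<Rightarrow> ('f \<Rightarrow> 'w) \<Rightarrow> 'f list \<Rightarrow> bool" where
  "is_closed_path Fd sF rF c \<longleftrightarrow> is_path Fd sF rF c \<and> path_src sF c = path_rng rF c"

end

theory Submission
  imports Defs
begin

lemma path_split:
  assumes "is_path Fd sF rF (a @ b)" "a \<noteq> []" "b \<noteq> []"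
  shows "is_path Fd sF rF a \<and> is_path Fd sF rF b \<and> rF (last a) = sF (hd b)"
proof -
  have P: "\<And>i. Suc i < length (a@b) \<Longrightarrow> rF ((a@b) ! i) = sF ((a@b) ! Suc i)"
    using assms(1) unfolding is_path_def by blast
  have s: "set (a@b) \<subseteq> Fd" using assms(1) unfolding is_path_def by blast
  have 1: "is_path Fd sF rF a"
    unfolding is_path_def
  proof (intro conjI allI impI)
    fix i assume "Suc i < length a"
    with P[of i] show "rF (a ! i) = sF (a ! Suc i)" by (simp add: nth_append)
  qed (use assms s in auto)
  have 2: "is_path Fd sF rF b"
    unfolding is_path_def
  proof (intro conjI allI impI)
    fix i assume "Suc i < length b"
    with P[of "length a + i"] show "rF (b ! i) = sF (b ! Suc i)" by (simp add: nth_append)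
  qed (use assms s in auto)
  have 3: "rF (last a) = sF (hd b)"
    using P[of "length a - 1"] assms(2,3)
    by (simp add: nth_append last_conv_nth hd_conv_nth)
  show ?thesis using 1 2 3 by blast
qed

lemma suffix_lemma:
  assumes inj: "\<forall>f\<in>Fd. \<forall>g\<in>Fd. rF f = rF g \<longrightarrow> f = g"
  shows "is_path Fd sF rF p \<Longrightarrow> is_path Fd sF rF q \<Longrightarrow> rF (last p) = rF (last q) \<Longrightarrow>
    (\<exists>c. q = c @ p) \<or> (\<exists>c. p = c @ q)"
proof (induction p arbitrary: q rule: rev_induct)
  case Nil
  then show ?case by (simp add: is_path_def)
next
  case (snoc x xs)
  have "q \<noteq> []" using snoc.prems by (simp add: is_path_def)
  then obtain ys y where q: "q = ys @ [y]" by (metis rev_exhaust)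
  have xF: "x \<in> Fd" using snoc.prems by (auto simp: is_path_def)
  have yF: "y \<in> Fd" using snoc.prems q by (auto simp: is_path_def)
  have xy: "x = y" using inj xF yF snoc.prems q by auto
  show ?case
  proof (cases "xs = [] \<or> ys = []")
    case True
    then show ?thesis using q xy by auto
  next
    case False
    have a: "is_path Fd sF rF xs \<and> rF (last xs) = sF x"
      using path_split[of Fd sF rF xs "[x]"] snoc.prems False by auto
    have b: "is_path Fd sF rF ys \<and> rF (last ys) = sF y"
      using path_split[of Fd sF rF ys "[y]"] snoc.prems False q by auto
    from snoc.IH[of ys] a b xy
    have "(\<exists>c. ys = c @ xs) \<or> (\<exists>c. xs = c @ ys)" by auto
    then show ?thesis using q xy by auto
  qed
qed

theorem lemma5p15:
  fixes V :: "'v set" and Ed :: "'e set" and s r :: "'e \<Rightarrow> 'v" and sp :: "'v \<Rightarrow> 'e"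
    and W :: "'w set" and Fd :: "'f set" and sF rF :: "'f \<Rightarrow> 'w"
    and phi0 :: "'w \<Rightarrow> 'v" and phi1 :: "'f \<Rightarrow> 'e dedge"
    and w :: 'w and p q :: "'f list"
  assumes "digraph V Ed s r"
    and "row_finite V Ed s"
    and "special_choice V Ed s sp"
    and "ext_rep_graph V Ed s r sp W Fd sF rF phi0 phi1"
    and "w \<in> W"
    and "is_path Fd sF rF p" and "path_src sF p = w"
    and "is_path Fd sF rF q" and "path_src sF q = w"
    and "path_rng rF p = path_rng rF q"
  shows "p = q \<or> (\<exists>c. is_closed_path Fd sF rF c \<and> (c @ p = q \<or> p = c @ q))"
proof -
  have inj: "\<forall>f\<in>Fd. \<forall>g\<in>Fd. rF f = rF g \<longrightarrow> f = g"
  proof (intro ballI impI)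
    fix f g assume f: "f \<in> Fd" and g: "g \<in> Fd" and e: "rF f = rF g"
    have "rF f \<in> W" using assms(4) f unfolding ext_rep_graph_def digraph_def by blast
    then have "{h\<in>Fd. rF h = rF f} = {} \<or> (\<exists>h. {h\<in>Fd. rF h = rF f} = {h})"
      using assms(4) unfolding ext_rep_graph_def by blast
    moreover have "f \<in> {h\<in>Fd. rF h = rF f}" "g \<in> {h\<in>Fd. rF h = rF f}" using f g e by auto
    ultimately show "f = g" by (metis empty_iff singletonD)
  qed
  have key: "is_closed_path Fd sF rF c" if big: "is_path Fd sF rF (c @ a)" and cne: "c \<noteq> []"
    and a: "is_path Fd sF rF a" and sa: "sF (hd a) = w" and sb: "sF (hd (c @ a)) = w" for c a
  proof -
    have ane: "a \<noteq> []" using a by (simp add: is_path_def)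
    from path_split[OF big cne ane] have "is_path Fd sF rF c \<and> rF (last c) = sF (hd a)" by blast
    then show ?thesis using sa sb cne unfolding is_closed_path_def path_src_def path_rng_def by simp
  qed
  from suffix_lemma[OF inj assms(6) assms(8)] assms(10)
  have "(\<exists>c. q = c @ p) \<or> (\<exists>c. p = c @ q)" by (simp add: path_rng_def)
  then show ?thesis
  proof
    assume "\<exists>c. q = c @ p"
    then obtain c where c: "q = c @ p" by blast
    show ?thesis
    proof (cases "c = []")
      case True then show ?thesis using c by simp
    next
      case False
      have "is_closed_path Fd sF rF c"
        using key[of c p] c False assms(6-9) by (simp add: path_src_def)
      then show ?thesis using c by blast
    qed
  next
    assume "\<exists>c. p = c @ q"
    then obtain c where c: "p = c @ q" by blast
    show ?thesis
    proof (cases "c = []")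
      case True then show ?thesis using c by simp
    next
      case False
      have "is_closed_path Fd sF rF c"
        using key[of c q] c False assms(6-9) by (simp add: path_src_def)
      then show ?thesis using c by blast
    qed
  qed
qed

end
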